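(* For every integer $n \geq 1$, $D_n = n\left[D_{n-1} + (-1)^{n-1}\right]$, with the convention $D_0 = 0$.
   Context: A linear arrangement of $\{1,\ldots,n\}$ is a sequence $a_1\cdots a_n$ in which each of $1,\ldots,n$ appears exactly once. It contains the pattern $ij$ if $a_t=i$ and $a_{t+1}=j$ for some $t$; otherwise it avoids it. $D_n$ is the number of linear arrangements of $\{1,\ldots,n\}$ avoiding all of the patterns $12, 23, \ldots, (n-1)n, n1$; $D_0=0$. *)

theory Defs
  imports Main
begin

definition linear_arrangement :: "nat \<Rightarrow> nat list \<Rightarrow> bool" where
  "linear_arrangement n xs \<longleftrightarrow> distinct xs \<and> set xs = {1..n}"

definition contains_pattern :: "nat list \<Rightarrow> nat \<Rightarrow> nat \<Rightarrow> bool" where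
  "contains_pattern xs i j \<longleftrightarrow> (\<exists>t. Suc t < length xs \<and> xs ! t = i \<and> xs ! Suc t = j)"

definition forbidden_patterns :: "nat \<Rightarrow> (nat \<times> nat) set" where
  "forbidden_patterns n = {(i, i + 1) | i. 1 \<le> i \<and> i < n} \<union> {(n, 1)}"

definition D :: "nat \<Rightarrow> nat" where
  "D n = (if n = 0 then 0 else
     card {xs. linear_arrangement n xs \<and>
               (\<forall>(i, j) \<in> forbidden_patterns n. \<not> contains_pattern xs i j)})"

end

theory Submission
  imports Defs
begin

fun adj :: "nat list \<Rightarrow> (nat \<times> nat) set" where
  "adj (x # y # xs) = insert (x, y) (adj (y # xs))"
| "adj _ = {}"

lemma cp_adj: "contains_pattern xs i j \<longleftrightarrow> (i,j) \<in> adj xs"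
proof (induction xs rule: adj.induct)
  case (1 x y xs)
  have "contains_pattern (x#y#xs) i j \<longleftrightarrow> (x = i \<and> y = j) \<or> contains_pattern (y#xs) i j"
    unfolding contains_pattern_def
  proof
    assume "\<exists>t. Suc t < length (x # y # xs) \<and> (x # y # xs) ! t = i \<and> (x # y # xs) ! Suc t = j"
    then obtain t where t: "Suc t < length (x # y # xs)" "(x # y # xs) ! t = i" "(x # y # xs) ! Suc t = j" by blast
    show "x = i \<and> y = j \<or> (\<exists>t. Suc t < length (y # xs) \<and> (y # xs) ! t = i \<and> (y # xs) ! Suc t = j)"
    proof (cases t)
      case 0 then show ?thesis using t by auto
    next
      case (Suc s) then show ?thesis using t by auto
    qed
  next
    assume "x = i \<and> y = j \<or> (\<exists>t. Suc t < length (y # xs) \<and> (y # xs) ! t = i \<and> (y # xs) ! Suc t = j)"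
    then show "\<exists>t. Suc t < length (x # y # xs) \<and> (x # y # xs) ! t = i \<and> (x # y # xs) ! Suc t = j"
    proof
      assume "x = i \<and> y = j" then show ?thesis by (intro exI[of _ 0]) auto
    next
      assume "\<exists>t. Suc t < length (y # xs) \<and> (y # xs) ! t = i \<and> (y # xs) ! Suc t = j"
      then obtain t where "Suc t < length (y # xs) \<and> (y # xs) ! t = i \<and> (y # xs) ! Suc t = j" by blast
      then show ?thesis by (intro exI[of _ "Suc t"]) auto
    qed
  qed
  then show ?case using 1 by auto
qed (auto simp: contains_pattern_def)

lemma adj_Cons: "adj (x # xs) = adj xs \<union> (if xs = [] then {} else {(x, hd xs)})"
  by (cases xs) auto

lemma adj_append: "adj (xs @ ys) = adj xs \<union> adj ys \<union> (if xs = [] \<or> ys = [] then {} else {(last xs, hd ys)})"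
proof (induction xs)
  case Nil then show ?case by simp
next
  case (Cons x xs)
  have "adj ((x#xs)@ys) = adj (xs@ys) \<union> (if xs@ys = [] then {} else {(x, hd (xs@ys))})"
    using adj_Cons[of x "xs@ys"] by simp
  then show ?case
    by (cases "xs = []"; cases "ys = []") (auto simp: adj_Cons Cons.IH)
qed

lemma adj_set: "(a,b) \<in> adj xs \<Longrightarrow> a \<in> set xs \<and> b \<in> set xs"
  by (induction xs rule: adj.induct) auto

lemma adj_split: "(a,b) \<in> adj xs \<Longrightarrow> \<exists>us vs. xs = us @ a # b # vs"
proof (induction xs rule: adj.induct)
  case (1 x y xs)
  then show ?case
  proof (cases "(a,b) = (x,y)")
    case True then show ?thesis by (intro exI[of _ "[]"] exI[of _ xs]) auto
  next
    case False
    then obtain us vs where "y # xs = us @ a # b # vs" using 1 by auto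
    then show ?thesis by (intro exI[of _ "x # us"] exI[of _ vs]) auto
  qed
qed auto

lemma adj_map: "adj (map f xs) = (\<lambda>(a,b). (f a, f b)) ` adj xs"
  by (induction xs rule: adj.induct) auto

definition V :: "nat \<Rightarrow> nat list set" where
  "V m = {xs. linear_arrangement m xs \<and> (\<forall>(i,j)\<in>adj xs. j \<noteq> Suc i \<and> (i = m \<longrightarrow> j \<noteq> 1))}"
definition W :: "nat \<Rightarrow> nat list set" where
  "W m = {xs. linear_arrangement m xs \<and> (\<forall>(i,j)\<in>adj xs. j \<noteq> Suc i) \<and> last xs \<noteq> m}"

lemma la_len: "linear_arrangement m xs \<Longrightarrow> length xs = m"
  unfolding linear_arrangement_def by (metis card_atLeastAtMost diff_Suc_1 distinct_card)

lemma fin_la: "finite {xs. linear_arrangement m xs}"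
  by (rule finite_subset[OF _ finite_lists_length_eq[of "{1..m}" m]])
     (auto simp: la_len, auto simp: linear_arrangement_def)

lemma fin_V: "finite (V m)" by (rule finite_subset[OF _ fin_la]) (auto simp: V_def)
lemma fin_W: "finite (W m)" by (rule finite_subset[OF _ fin_la]) (auto simp: W_def)

lemma D_V: "m \<ge> 1 \<Longrightarrow> D m = card (V m)"
proof -
  assume m: "m \<ge> 1"
  have "{xs. linear_arrangement m xs \<and> (\<forall>(i, j) \<in> forbidden_patterns m. \<not> contains_pattern xs i j)} = V m"
  proof (intro set_eqI iffI)
    fix xs assume xs: "xs \<in> {xs. linear_arrangement m xs \<and> (\<forall>(i, j) \<in> forbidden_patterns m. \<not> contains_pattern xs i j)}"
    show "xs \<in> V m" unfolding V_def
    proof (safe)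
      show "linear_arrangement m xs" using xs by auto
    next
      fix i assume a: "(i, Suc i) \<in> adj xs"
      then have "i \<in> {1..m}" "Suc i \<in> {1..m}" using adj_set[OF a] xs by (auto simp: linear_arrangement_def)
      then have "(i, i+1) \<in> forbidden_patterns m" by (auto simp: forbidden_patterns_def)
      then show False using xs a by (auto simp: cp_adj)
    next
      assume a: "(m, 1) \<in> adj xs"
      have "(m, 1) \<in> forbidden_patterns m" by (auto simp: forbidden_patterns_def)
      then show False using xs a by (auto simp: cp_adj)
    qed
  next
    fix xs assume xs: "xs \<in> V m"
    then show "xs \<in> {xs. linear_arrangement m xs \<and> (\<forall>(i, j) \<in> forbidden_patterns m. \<not> contains_pattern xs i j)}"
      by (auto simp: V_def forbidden_patterns_def cp_adj)
  qed
  then show ?thesis using m by (simp add: D_def)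
qed


lemma adj_snd: "(a,b) \<in> adj (y # xs) \<Longrightarrow> b \<in> set xs"
  by (induction "y # xs" arbitrary: y xs rule: adj.induct) (auto simp: adj_Cons split: if_splits dest: adj_set)

lemma adj_pred_uniq: "distinct xs \<Longrightarrow> (a,b) \<in> adj xs \<Longrightarrow> (c,b) \<in> adj xs \<Longrightarrow> a = c"
proof (induction xs rule: adj.induct)
  case (1 x y xs)
  then show ?case using adj_snd[of _ b y xs] by auto
qed auto

lemma adj_neq: "distinct xs \<Longrightarrow> (a,b) \<in> adj xs \<Longrightarrow> a \<noteq> b"
  by (induction xs rule: adj.induct) (auto dest: adj_set)

lemma adj_last: "distinct xs \<Longrightarrow> (a,b) \<in> adj xs \<Longrightarrow> last xs \<noteq> a"
proof -
  assume d: "distinct xs" and ab: "(a,b) \<in> adj xs"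
  obtain us vs where xs: "xs = us @ a # b # vs" using adj_split[OF ab] by blast
  have "last xs \<in> set (b # vs)" unfolding xs by simp
  then show ?thesis using d unfolding xs by auto
qed

definition r :: "nat \<Rightarrow> nat \<Rightarrow> nat" where "r m i = (if i = m then 1 else Suc i)"

lemma r_inj: "inj_on (r m) {1..m}"
  by (auto simp: inj_on_def r_def split: if_splits)

lemma r_img: "m \<ge> 1 \<Longrightarrow> r m ` {1..m} = {1..m}"
  using r_inj[of m] by (intro endo_inj_surj) (auto simp: r_def)

lemma V_ne: "m \<ge> 1 \<Longrightarrow> xs \<in> V m \<Longrightarrow> xs \<noteq> []"
  by (auto simp: V_def linear_arrangement_def)

lemma V_rot: "m \<ge> 1 \<Longrightarrow> xs \<in> V m \<Longrightarrow> map (r m) xs \<in> V m"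
proof -
  assume m: "m \<ge> 1" and xs: "xs \<in> V m"
  have la: "distinct xs" "set xs = {1..m}" using xs by (auto simp: V_def linear_arrangement_def)
  have "inj_on (r m) (set xs)" using r_inj la by simp
  then have "linear_arrangement m (map (r m) xs)"
    using la r_img[OF m] by (auto simp: linear_arrangement_def distinct_map)
  moreover have "j \<noteq> Suc i \<and> (i = m \<longrightarrow> j \<noteq> 1)" if ij: "(i,j) \<in> adj (map (r m) xs)" for i j
  proof -
    obtain a b where ab: "(a,b) \<in> adj xs" "i = r m a" "j = r m b" using ij by (auto simp: adj_map)
    have c: "b \<noteq> Suc a" "a = m \<longrightarrow> b \<noteq> 1" using xs ab(1) by (auto simp: V_def)
    have "a \<noteq> b" using adj_neq[OF la(1) ab(1)] .
    moreover have "a \<in> {1..m}" "b \<in> {1..m}" using adj_set[OF ab(1)] la by auto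
    ultimately show ?thesis using c ab by (auto simp: r_def split: if_splits)
  qed
  ultimately show ?thesis by (auto simp: V_def)
qed

definition N :: "nat \<Rightarrow> nat \<Rightarrow> nat" where "N m c = card {xs\<in>V m. last xs = c}"

lemma N_le: "m \<ge> 1 \<Longrightarrow> c \<in> {1..m} \<Longrightarrow> N m c \<le> N m (r m c)"
  unfolding N_def
proof (rule card_inj_on_le[where f = "map (r m)"])
  assume m: "m \<ge> 1"
  show "inj_on (map (r m)) {xs \<in> V m. last xs = c}"
  proof (rule inj_onI)
    fix xs ys assume "xs \<in> {xs \<in> V m. last xs = c}" "ys \<in> {xs \<in> V m. last xs = c}" "map (r m) xs = map (r m) ys"
    moreover then have "set xs \<union> set ys \<subseteq> {1..m}" by (auto simp: V_def linear_arrangement_def)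
    ultimately show "xs = ys" using map_inj_on inj_on_subset[OF r_inj] by metis
  qed
  show "map (r m) ` {xs \<in> V m. last xs = c} \<subseteq> {xs \<in> V m. last xs = r m c}"
    using V_rot[OF m] V_ne[OF m] by (auto simp: last_map)
  show "finite {xs \<in> V m. last xs = r m c}" using fin_V by simp
qed

lemma N_chain: "1 \<le> k \<Longrightarrow> k \<le> j \<Longrightarrow> j \<le> m \<Longrightarrow> N m k \<le> N m j"
proof (induction j)
  case 0 then show ?case by simp
next
  case (Suc j)
  show ?case
  proof (cases "k = Suc j")
    case False
    then have "N m k \<le> N m j" using Suc by simp
    also have "\<dots> \<le> N m (r m j)" using Suc False by (intro N_le) auto
    also have "r m j = Suc j" using Suc by (simp add: r_def)
    finally show ?thesis .
  qed simp
qed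

lemma N_const: "m \<ge> 1 \<Longrightarrow> k \<in> {1..m} \<Longrightarrow> N m k = N m m"
proof -
  assume m: "m \<ge> 1" and k: "k \<in> {1..m}"
  have "N m k \<le> N m m" using k by (intro N_chain) auto
  moreover have "N m m \<le> N m (r m m)" using m by (intro N_le) auto
  moreover have "N m 1 \<le> N m k" using k by (intro N_chain) auto
  ultimately show ?thesis by (simp add: r_def)
qed

lemma card_V: "m \<ge> 1 \<Longrightarrow> card (V m) = m * N m m"
proof -
  assume m: "m \<ge> 1"
  have eq: "V m = (\<Union>c\<in>{1..m}. {xs\<in>V m. last xs = c})"
  proof (intro equalityI subsetI)
    fix xs assume xs: "xs \<in> V m"
    have "xs \<noteq> []" using V_ne[OF m xs] .
    then have "last xs \<in> set xs" by simp
    moreover have "set xs = {1..m}" using xs unfolding V_def linear_arrangement_def by blast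
    ultimately have "last xs \<in> {1..m}" by simp
    then show "xs \<in> (\<Union>c\<in>{1..m}. {xs\<in>V m. last xs = c})" using xs by blast
  next
    fix xs assume "xs \<in> (\<Union>c\<in>{1..m}. {xs\<in>V m. last xs = c})"
    then show "xs \<in> V m" by blast
  qed
  have "card (V m) = card (\<Union>c\<in>{1..m}. {xs\<in>V m. last xs = c})"
    by (rule arg_cong[OF eq])
  also have "\<dots> = (\<Sum>c\<in>{1..m}. N m c)"
    unfolding N_def
  proof (rule card_UN_disjoint)
    show "finite {1..m}" by simp
    show "\<forall>i\<in>{1..m}. finite {xs \<in> V m. last xs = i}" using fin_V by simp
    show "\<forall>i\<in>{1..m}. \<forall>j\<in>{1..m}. i \<noteq> j \<longrightarrow> {xs \<in> V m. last xs = i} \<inter> {xs \<in> V m. last xs = j} = {}"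
      by blast
  qed
  also have "\<dots> = (\<Sum>c\<in>{1..m}. N m m)" by (intro sum.cong refl N_const[OF m])
  finally show ?thesis by simp
qed

lemma set_rm: "insert (m::nat) S = {1..m} \<Longrightarrow> m \<notin> S \<Longrightarrow> S = {1..m-1}"
proof -
  assume a: "insert m S = {1..m}" "m \<notin> S"
  have "S = {1..m} - {m}" using a by blast
  moreover have "m \<in> {1..m}" using a(1) by (metis insertI1)
  then have "{1..m} - {m} = {1..m-1}" by (cases m) auto
  ultimately show ?thesis by simp
qed

lemma ins_top: "m \<ge> 1 \<Longrightarrow> insert m {1..m-1} = {1..(m::nat)}"
  by (cases m) auto

lemma N_W: "m \<ge> 2 \<Longrightarrow> N m m = card (W (m - 1))"
proof -
  assume m: "m \<ge> 2"
  have "bij_betw (\<lambda>u. u @ [m]) (W (m - 1)) {xs\<in>V m. last xs = m}"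
  proof (rule bij_betw_byWitness[where f' = butlast])
    show "\<forall>a\<in>W (m - 1). butlast (a @ [m]) = a" by simp
    show "\<forall>a'\<in>{xs \<in> V m. last xs = m}. butlast a' @ [m] = a'"
      using V_ne[of m] m by (auto intro: append_butlast_last_id)
    show "(\<lambda>u. u @ [m]) ` W (m - 1) \<subseteq> {xs \<in> V m. last xs = m}"
    proof safe
      fix u assume u: "u \<in> W (m - 1)"
      have d: "distinct u" "set u = {1..m-1}" "\<forall>(i,j)\<in>adj u. j \<noteq> Suc i" "last u \<noteq> m - 1"
        using u by (auto simp: W_def linear_arrangement_def)
      have ne: "u \<noteq> []" using d(2) m by auto
      have lu: "last u \<in> {1..m-1}" using ne d(2) last_in_set by blast
      have mu: "m \<notin> set u" using d(2) m by auto
      have "set (u @ [m]) = {1..m}" using d(2) ins_top[of m] m by simp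
      moreover have "distinct (u @ [m])" using d(1) mu by simp
      moreover have A: "adj (u @ [m]) = adj u \<union> {(last u, m)}" using ne by (simp add: adj_append)
      have "j \<noteq> Suc i \<and> (i = m \<longrightarrow> j \<noteq> 1)" if ij: "(i,j) \<in> adj (u @ [m])" for i j
      proof (cases "(i,j) \<in> adj u")
        case True
        then have "i \<in> set u" using adj_set by blast
        then show ?thesis using True d(3) mu by auto
      next
        case False
        then have "i = last u" "j = m" using ij A by auto
        moreover have "last u \<noteq> m" "last u \<noteq> m - 1" using lu d(4) mu ne by auto
        ultimately show ?thesis by auto
      qed
      ultimately show "u @ [m] \<in> V m" unfolding V_def linear_arrangement_def by blast
    qed simp
    show "butlast ` {xs \<in> V m. last xs = m} \<subseteq> W (m - 1)"
    proof
      fix y assume "y \<in> butlast ` {xs \<in> V m. last xs = m}"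
      then obtain xs where xs: "xs \<in> V m" "last xs = m" and y: "y = butlast xs" by blast
      define u where "u = butlast xs"
      have xsu: "xs = u @ [m]" using xs V_ne[of m xs] m unfolding u_def by (auto intro: append_butlast_last_id[symmetric])
      have d: "distinct xs" "set xs = {1..m}" "\<forall>(i,j)\<in>adj xs. j \<noteq> Suc i"
        using xs by (auto simp: V_def linear_arrangement_def)
      have iu: "insert m (set u) = {1..m}" "m \<notin> set u" "distinct u" using d unfolding xsu by auto
      have su: "set u = {1..m-1}" "distinct u" using set_rm[OF iu(1,2)] iu(3) by auto
      have ne: "u \<noteq> []" using su m by auto
      have "adj xs = adj u \<union> {(last u, m)}" using ne unfolding xsu by (simp add: adj_append)
      then have "\<forall>(i,j)\<in>adj u. j \<noteq> Suc i" "m \<noteq> Suc (last u)" using d(3) by auto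
      moreover have "last u \<noteq> m - 1" using calculation(2) m by auto
      ultimately have "u \<in> W (m - 1)" using su unfolding W_def linear_arrangement_def by blast
      then show "y \<in> W (m - 1)" unfolding y u_def by simp
    qed
  qed
  then show ?thesis unfolding N_def by (simp add: bij_betw_same_card)
qed

definition insm :: "nat \<Rightarrow> nat list \<Rightarrow> nat list" where
  "insm m xs = concat (map (\<lambda>x. if x = 1 then [m, 1] else [x]) xs)"

lemma insm_id: "1 \<notin> set xs \<Longrightarrow> insm m xs = xs"
  by (induction xs) (auto simp: insm_def)

lemma insm_split: "1 \<notin> set us \<Longrightarrow> 1 \<notin> set vs \<Longrightarrow> insm m (us @ 1 # vs) = us @ m # 1 # vs"
  using insm_id[of us m] insm_id[of vs m] by (simp add: insm_def)

lemma adj_mid: "adj (us @ a # b # vs) = adj us \<union> (if us = [] then {} else {(last us, a)}) \<union> {(a,b)} \<union> adj (b # vs)"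
  by (auto simp: adj_append)

lemma adj_mid1: "adj (us @ b # vs) = adj us \<union> (if us = [] then {} else {(last us, b)}) \<union> adj (b # vs)"
  by (auto simp: adj_append)

lemma WV_diff: "m \<ge> 2 \<Longrightarrow> card (W m - V m) = card (V (m - 1))"
proof -
  assume m: "m \<ge> 2"
  have "bij_betw (filter (\<lambda>x. x \<noteq> m)) (W m - V m) (V (m - 1))"
  proof (rule bij_betw_byWitness[where f' = "insm m"])
    have dec: "\<exists>us vs. xs = us @ m # 1 # vs \<and> 1 \<notin> set us \<and> 1 \<notin> set vs \<and> m \<notin> set us \<and> m \<notin> set vs
               \<and> us @ 1 # vs \<in> V (m - 1)" if xs: "xs \<in> W m - V m" for xs
    proof -
      have d: "distinct xs" "set xs = {1..m}" "\<forall>(i,j)\<in>adj xs. j \<noteq> Suc i" "last xs \<noteq> m"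
        using xs by (auto simp: W_def linear_arrangement_def)
      have m1: "(m,1) \<in> adj xs" using xs by (auto simp: W_def V_def)
      obtain us vs where xsd: "xs = us @ m # 1 # vs" using adj_split[OF m1] by blast
      have nn: "1 \<notin> set us" "1 \<notin> set vs" "m \<notin> set us" "m \<notin> set vs" using d(1) m unfolding xsd by auto
      have A: "adj xs = adj us \<union> (if us = [] then {} else {(last us, m)}) \<union> {(m,1)} \<union> adj (1 # vs)"
        unfolding xsd by (rule adj_mid)
      have "insert m (insert 1 (set us \<union> set vs)) = {1..m}" using d(2) unfolding xsd by auto
      then have eq: "insert 1 (set us \<union> set vs) = {1..m-1}" by (rule set_rm) (use nn m in auto)
      have su: "set (us @ 1 # vs) = {1..m-1}" using eq by auto
      have du: "distinct (us @ 1 # vs)" using d(1) unfolding xsd by auto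
      have "j \<noteq> Suc i \<and> (i = m - 1 \<longrightarrow> j \<noteq> 1)" if ij: "(i,j) \<in> adj (us @ 1 # vs)" for i j
      proof -
        have B: "adj (us @ 1 # vs) = adj us \<union> (if us = [] then {} else {(last us, 1)}) \<union> adj (1 # vs)"
          by (rule adj_mid1)
        show ?thesis
        proof (cases "us \<noteq> [] \<and> (i,j) = (last us, 1)")
          case True
          then have "(last us, m) \<in> adj xs" using A by auto
          then have "m \<noteq> Suc (last us)" using d(3) by auto
          moreover have "last us \<in> set us" using True by auto
          then have "last us \<ge> 1" using su by auto
          ultimately show ?thesis using True m by auto
        next
          case False
          then have ijx: "(i,j) \<in> adj xs" using ij A B by auto
          have "j \<noteq> Suc i" using d(3) ijx by auto
          moreover have "j = 1 \<Longrightarrow> i = m" using adj_pred_uniq[OF d(1) ijx] m1 by auto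
          moreover have "i \<in> set (us @ 1 # vs)" using adj_set[OF ij] by simp
          ultimately show ?thesis using su m by auto
        qed
      qed
      then have "us @ 1 # vs \<in> V (m - 1)" using su du by (auto simp: V_def linear_arrangement_def)
      then show ?thesis using xsd nn by blast
    qed
    show "\<forall>a\<in>W m - V m. insm m (filter (\<lambda>x. x \<noteq> m) a) = a"
    proof
      fix xs assume "xs \<in> W m - V m"
      then obtain us vs where "xs = us @ m # 1 # vs" "1 \<notin> set us" "1 \<notin> set vs" "m \<notin> set us" "m \<notin> set vs"
        using dec by blast
      moreover have "m \<noteq> 1" using m by simp
      moreover have "filter (\<lambda>x. x \<noteq> m) us = us" "filter (\<lambda>x. x \<noteq> m) vs = vs"
        using calculation by (auto intro: filter_True)
      ultimately show "insm m (filter (\<lambda>x. x \<noteq> m) xs) = xs"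
        using insm_split[of us vs m] by simp
    qed
    show "filter (\<lambda>x. x \<noteq> m) ` (W m - V m) \<subseteq> V (m - 1)"
    proof
      fix ys assume "ys \<in> filter (\<lambda>x. x \<noteq> m) ` (W m - V m)"
      then obtain xs where xs: "xs \<in> W m - V m" "ys = filter (\<lambda>x. x \<noteq> m) xs" by blast
      then obtain us vs where "xs = us @ m # 1 # vs" "1 \<notin> set us" "1 \<notin> set vs" "m \<notin> set us" "m \<notin> set vs"
        "us @ 1 # vs \<in> V (m - 1)"
        using dec by blast
      moreover have "m \<noteq> 1" using m by simp
      moreover have "filter (\<lambda>x. x \<noteq> m) us = us" "filter (\<lambda>x. x \<noteq> m) vs = vs"
        using calculation by (auto intro: filter_True)
      ultimately show "ys \<in> V (m - 1)" using xs(2) by simp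
    qed
    have dec2: "\<exists>us vs. u = us @ 1 # vs \<and> 1 \<notin> set us \<and> 1 \<notin> set vs \<and> m \<notin> set us \<and> m \<notin> set vs
               \<and> us @ m # 1 # vs \<in> W m - V m" if u: "u \<in> V (m - 1)" for u
    proof -
      have d: "distinct u" "set u = {1..m-1}" "\<forall>(i,j)\<in>adj u. j \<noteq> Suc i \<and> (i = m - 1 \<longrightarrow> j \<noteq> 1)"
        using u by (auto simp: V_def linear_arrangement_def)
      have "1 \<in> set u" using d(2) m by auto
      then obtain us vs where ud: "u = us @ 1 # vs" using split_list by metis
      have "m \<notin> set u" using d(2) m by auto
      then have nn: "1 \<notin> set us" "1 \<notin> set vs" "m \<notin> set us" "m \<notin> set vs" using d(1) unfolding ud by auto
      define xs where "xs = us @ m # 1 # vs"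
      have A: "adj xs = adj us \<union> (if us = [] then {} else {(last us, m)}) \<union> {(m,1)} \<union> adj (1 # vs)"
        unfolding xs_def by (rule adj_mid)
      have B: "adj u = adj us \<union> (if us = [] then {} else {(last us, 1)}) \<union> adj (1 # vs)"
        unfolding ud by (rule adj_mid1)
      have "set xs = insert m (set u)" unfolding ud xs_def by auto
      then have sx: "set xs = {1..m}" using d(2) m ins_top[of m] by simp
      have dx: "distinct xs" using d(1) nn m unfolding ud xs_def by auto
      have "j \<noteq> Suc i" if ij: "(i,j) \<in> adj xs" for i j
      proof -
        consider "(i,j) \<in> adj us \<union> adj (1 # vs)" | "us \<noteq> [] \<and> (i,j) = (last us, m)" | "(i,j) = (m,1)"
          using ij A by (auto split: if_splits)
        then show ?thesis
        proof cases
          case 1 then show ?thesis using d(3) B by auto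
        next
          case 2
          then have "(last us, 1) \<in> adj u" using B by auto
          then have "last us \<noteq> m - 1" using d(3) by auto
          then show ?thesis using 2 m by auto
        qed (use m in auto)
      qed
      moreover have "last xs \<noteq> m"
      proof -
        have "last xs \<in> set (1 # vs)" unfolding xs_def by simp
        then show ?thesis using nn m by auto
      qed
      moreover have "(m,1) \<in> adj xs" using A by auto
      ultimately have "xs \<in> W m - V m" using sx dx by (auto simp: W_def V_def linear_arrangement_def)
      then show ?thesis using ud nn xs_def by blast
    qed
    show "\<forall>a'\<in>V (m - 1). filter (\<lambda>x. x \<noteq> m) (insm m a') = a'"
    proof
      fix u assume "u \<in> V (m - 1)"
      then obtain us vs where "u = us @ 1 # vs" "1 \<notin> set us" "1 \<notin> set vs" "m \<notin> set us" "m \<notin> set vs"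
        using dec2 by blast
      moreover have "m \<noteq> 1" using m by simp
      moreover have "filter (\<lambda>x. x \<noteq> m) us = us" "filter (\<lambda>x. x \<noteq> m) vs = vs"
        using calculation by (auto intro: filter_True)
      ultimately show "filter (\<lambda>x. x \<noteq> m) (insm m u) = u"
        using insm_split[of us vs m] by simp
    qed
    show "insm m ` V (m - 1) \<subseteq> W m - V m"
    proof
      fix xs assume "xs \<in> insm m ` V (m - 1)"
      then obtain u where u: "u \<in> V (m - 1)" "xs = insm m u" by blast
      then obtain us vs where "u = us @ 1 # vs" "1 \<notin> set us" "1 \<notin> set vs" "us @ m # 1 # vs \<in> W m - V m"
        using dec2 by blast
      then show "xs \<in> W m - V m" using u(2) insm_split[of us vs m] by simp
    qed
  qed
  then show ?thesis by (simp add: bij_betw_same_card)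
qed

lemma VW_diff: "m \<ge> 2 \<Longrightarrow> V m - W m = {xs\<in>V m. last xs = m}"
proof (intro set_eqI iffI)
  fix xs assume m: "m \<ge> 2" and xs: "xs \<in> V m - W m"
  have a: "linear_arrangement m xs" "\<forall>(i,j)\<in>adj xs. j \<noteq> Suc i" using xs unfolding V_def by auto
  have "last xs = m"
  proof (rule ccontr)
    assume "last xs \<noteq> m"
    then have "xs \<in> W m" using a unfolding W_def by blast
    then show False using xs by blast
  qed
  then show "xs \<in> {xs\<in>V m. last xs = m}" using xs by blast
next
  fix xs assume m: "m \<ge> 2" and xs: "xs \<in> {xs\<in>V m. last xs = m}"
  then show "xs \<in> V m - W m" unfolding W_def by blast
qed

lemma rec: "m \<ge> 2 \<Longrightarrow> card (W m) + card (W (m - 1)) = card (V m) + card (V (m - 1))"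
proof -
  assume m: "m \<ge> 2"
  have w: "card (W m) = card (W m \<inter> V m) + card (W m - V m)"
    using card_Int_Diff[OF fin_W] .
  have v: "card (V m) = card (W m \<inter> V m) + card (V m - W m)"
    using card_Int_Diff[OF fin_V, of m "W m"] by (simp add: Int_commute)
  have "card (V m - W m) = card (W (m - 1))" using VW_diff[OF m] N_W[OF m] by (simp add: N_def)
  then show ?thesis using w v WV_diff[OF m] by simp
qed

lemma la1: "linear_arrangement 1 xs \<Longrightarrow> xs = [1]"
proof -
  assume la: "linear_arrangement 1 xs"
  have "length xs = Suc 0" using la_len[OF la] by simp
  then obtain x where x: "xs = [x]" by (auto simp: length_Suc_conv)
  have "set xs = {1..1}" using la unfolding linear_arrangement_def by blast
  then have "x = 1" unfolding x by simp
  then show ?thesis using x by simp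
qed

lemma la1': "linear_arrangement 1 [1]"
  unfolding linear_arrangement_def by simp

lemma W1: "W 1 = {}"
  using la1 unfolding W_def by fastforce

lemma V1: "V 1 = {[1]}"
proof (intro equalityI subsetI)
  fix xs assume "xs \<in> V 1"
  then show "xs \<in> {[1]}" using la1 unfolding V_def by blast
next
  fix xs :: "nat list" assume "xs \<in> {[1]}"
  then show "xs \<in> V 1" using la1' unfolding V_def by simp
qed

lemma W_formula: "m \<ge> 1 \<Longrightarrow> int (card (W m)) = int (card (V m)) + (-1) ^ m"
proof (induction m rule: dec_induct[where i = 1])
  case base then show ?case unfolding W1 V1 by simp
next
  case (step m)
  have "card (W (Suc m)) + card (W m) = card (V (Suc m)) + card (V m)"
    using rec[of "Suc m"] step by simp
  then show ?case using step by simp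
qed

theorem corollary3p2:
  fixes n :: nat
  assumes "n \<ge> 1"
  shows "int (D n) = int n * (int (D (n - 1)) + (-1) ^ (n - 1))"
proof (cases "n = 1")
  case True
  have "D 1 = 1" using D_V[of 1] V1 by simp
  then show ?thesis using True by (simp add: D_def[of 0])
next
  case False
  then have n: "n \<ge> 2" using assms by simp
  have "D n = n * card (W (n - 1))" using D_V[of n] card_V[of n] N_W[OF n] n by simp
  moreover have "int (card (W (n - 1))) = int (D (n - 1)) + (-1) ^ (n - 1)"
    using W_formula[of "n - 1"] D_V[of "n - 1"] n by simp
  ultimately show ?thesis by simp
qed

end
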